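(* Let $\mathbf{A}_1$ be an algebra over a signature $\Theta$ with universe $\{0,1/2,1\}$, and let $L_1=\langle\mathbf{A}_1,F_1\rangle$ with $0\notin F_1$ and $1\in F_1$. Let $\mathbf{A}_2$ be a subalgebra of $\mathbf{A}_1$ with universe $\{0,1\}$, and let $L_2=\langle\mathbf{A}_2,\{1\}\rangle$ (a presentation of classical propositional logic over $\Theta$), with $L_2$ distinct from $L_1$. Suppose there are formulas $\top(p)$ and $\bot(p)$ in one variable $p$ with $e(\top(p))=1$ and $e(\bot(p))=0$ for every evaluation $e$ into $\mathbf{A}_1$. Then $L_1$ is maximal with respect to $L_2$.
   Context: A logical matrix is a pair $\langle\mathbf{A},F\rangle$ with $\mathbf{A}$ an algebra over $\Theta$ and $\emptyset\neq F\subseteq A$; the matrix logic has consequence relation $\Gamma\vdash\varphi$ iff every homomorphism $e$ from the formula algebra into $\mathbf{A}$ with $e[\Gamma]\subseteq F$ satisfies $e(\varphi)\in F$. $L_1$ is maximal with respect to $L_2$ if ${\vdash_{L_1}}\subsetneq{\vdash_{L_2}}$ and for every formula $\varphi$ with $\vdash_{L_2}\varphi$ but $\nvdash_{L_1}\varphi$, the logic obtained from $L_1$ by adding all substitution instances of $\varphi$ as extra premises (i.e. $\Gamma\vdash\psi$ iff $\Gamma\cup\{\sigma(\varphi):\sigma\text{ substitution}\}\vdash_{L_1}\psi$) coincides with $L_2$. *)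

theory Defs
  imports Main "HOL-Library.Rewrite" Complex_Main
begin

datatype 'f form = Var nat | Op 'f "'f form list"

fun wf :: "('f \<Rightarrow> nat) \<Rightarrow> 'f form \<Rightarrow> bool" where
  "wf ar (Var n) = True"
| "wf ar (Op f ts) = (length ts = ar f \<and> (\<forall>t\<in>set ts. wf ar t))"

definition wff :: "('f \<Rightarrow> nat) \<Rightarrow> 'f form set" where
  "wff ar = {\<phi>. wf ar \<phi>}"

fun vars :: "'f form \<Rightarrow> nat set" where
  "vars (Var n) = {n}"
| "vars (Op f ts) = (\<Union>t\<in>set ts. vars t)"

fun eval :: "('f \<Rightarrow> 'a list \<Rightarrow> 'a) \<Rightarrow> (nat \<Rightarrow> 'a) \<Rightarrow> 'f form \<Rightarrow> 'a" where
  "eval I v (Var n) = v n"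
| "eval I v (Op f ts) = I f (map (eval I v) ts)"

fun subst :: "(nat \<Rightarrow> 'f form) \<Rightarrow> 'f form \<Rightarrow> 'f form" where
  "subst \<sigma> (Var n) = \<sigma> n"
| "subst \<sigma> (Op f ts) = Op f (map (subst \<sigma>) ts)"

text \<open>A carrier set A is closed under the operations (so (A, I restricted to A) is an algebra).\<close>
definition closed :: "('f \<Rightarrow> nat) \<Rightarrow> ('f \<Rightarrow> 'a list \<Rightarrow> 'a) \<Rightarrow> 'a set \<Rightarrow> bool" where
  "closed ar I A = (\<forall>f xs. length xs = ar f \<longrightarrow> set xs \<subseteq> A \<longrightarrow> I f xs \<in> A)"

definition matrix_cons :: "('f \<Rightarrow> 'a list \<Rightarrow> 'a) \<Rightarrow> 'a set \<Rightarrow> 'a set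
    \<Rightarrow> 'f form set \<Rightarrow> 'f form \<Rightarrow> bool" where
  "matrix_cons I A F \<Gamma> \<phi> = (\<forall>v. range v \<subseteq> A \<longrightarrow> (\<forall>\<gamma>\<in>\<Gamma>. eval I v \<gamma> \<in> F) \<longrightarrow> eval I v \<phi> \<in> F)"

text \<open>Logics are consequence relations, considered on well-formed formulas only.\<close>
definition same_logic :: "('f \<Rightarrow> nat) \<Rightarrow> ('f form set \<Rightarrow> 'f form \<Rightarrow> bool)
    \<Rightarrow> ('f form set \<Rightarrow> 'f form \<Rightarrow> bool) \<Rightarrow> bool" where
  "same_logic ar C1 C2 = (\<forall>\<Gamma> \<psi>. \<Gamma> \<subseteq> wff ar \<longrightarrow> \<psi> \<in> wff ar \<longrightarrow> (C1 \<Gamma> \<psi> \<longleftrightarrow> C2 \<Gamma> \<psi>))"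

definition sub_logic :: "('f \<Rightarrow> nat) \<Rightarrow> ('f form set \<Rightarrow> 'f form \<Rightarrow> bool)
    \<Rightarrow> ('f form set \<Rightarrow> 'f form \<Rightarrow> bool) \<Rightarrow> bool" where
  "sub_logic ar C1 C2 = (\<forall>\<Gamma> \<psi>. \<Gamma> \<subseteq> wff ar \<longrightarrow> \<psi> \<in> wff ar \<longrightarrow> C1 \<Gamma> \<psi> \<longrightarrow> C2 \<Gamma> \<psi>)"

definition strict_sub_logic :: "('f \<Rightarrow> nat) \<Rightarrow> ('f form set \<Rightarrow> 'f form \<Rightarrow> bool)
    \<Rightarrow> ('f form set \<Rightarrow> 'f form \<Rightarrow> bool) \<Rightarrow> bool" where
  "strict_sub_logic ar C1 C2 = (sub_logic ar C1 C2 \<and> \<not> same_logic ar C1 C2)"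

definition sub_insts :: "('f \<Rightarrow> nat) \<Rightarrow> 'f form \<Rightarrow> 'f form set" where
  "sub_insts ar \<phi> = {subst \<sigma> \<phi> | \<sigma>. \<forall>n. wf ar (\<sigma> n)}"

definition axiom_ext :: "('f \<Rightarrow> nat) \<Rightarrow> ('f form set \<Rightarrow> 'f form \<Rightarrow> bool) \<Rightarrow> 'f form
    \<Rightarrow> 'f form set \<Rightarrow> 'f form \<Rightarrow> bool" where
  "axiom_ext ar C \<phi> \<Gamma> \<psi> = C (\<Gamma> \<union> sub_insts ar \<phi>) \<psi>"

definition maximal_wrt :: "('f \<Rightarrow> nat) \<Rightarrow> ('f form set \<Rightarrow> 'f form \<Rightarrow> bool)
    \<Rightarrow> ('f form set \<Rightarrow> 'f form \<Rightarrow> bool) \<Rightarrow> bool" where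
  "maximal_wrt ar C1 C2 = (strict_sub_logic ar C1 C2 \<and>
     (\<forall>\<phi>\<in>wff ar. C2 {} \<phi> \<longrightarrow> \<not> C1 {} \<phi> \<longrightarrow> same_logic ar (axiom_ext ar C1 \<phi>) C2))"

end

theory Submission
  imports Defs
begin

lemma eval_closed:
  assumes "closed ar I A" "range v \<subseteq> A" shows "wf ar t \<Longrightarrow> eval I v t \<in> A"
proof (induction t)
  case (Var n) then show ?case using assms(2) by auto
next
  case (Op f ts)
  have "set (map (eval I v) ts) \<subseteq> A" using Op by auto
  moreover have "length (map (eval I v) ts) = ar f" using Op.prems by simp
  ultimately show ?case using assms(1) unfolding closed_def by simp
qed

lemma eval_subst: "eval I v (subst \<sigma> t) = eval I (\<lambda>n. eval I v (\<sigma> n)) t"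
  by (induction t) (simp_all cong: map_cong)

theorem corollary2p3:
  fixes ar :: "'f \<Rightarrow> nat" and I :: "'f \<Rightarrow> real list \<Rightarrow> real"
    and F1 :: "real set" and top bot :: "'f form" and p :: nat
  assumes A1: "closed ar I {0, 1/2, 1}"
    and F1: "F1 \<subseteq> {0, 1/2, 1}" "0 \<notin> F1" "1 \<in> F1"
    and A2: "closed ar I {0, 1}"
    and distinct: "\<not> same_logic ar (matrix_cons I {0, 1/2, 1} F1) (matrix_cons I {0, 1} {1})"
    and top: "wf ar top" "vars top \<subseteq> {p}"
      "\<And>v. range v \<subseteq> {0, 1/2, 1} \<Longrightarrow> eval I v top = 1"
    and bot: "wf ar bot" "vars bot \<subseteq> {p}"
      "\<And>v. range v \<subseteq> {0, 1/2, 1} \<Longrightarrow> eval I v bot = 0"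
  shows "maximal_wrt ar (matrix_cons I {0, 1/2, 1} F1) (matrix_cons I {0, 1} {1})"
proof -
  have sub2: "{0,1::real} \<subseteq> {0,1/2,1}" by auto
  have key: "matrix_cons I {0, 1} {1} \<Gamma> \<psi>"
    if "\<Gamma> \<subseteq> wff ar" "\<psi> \<in> wff ar" "matrix_cons I {0, 1/2, 1} F1 \<Gamma> \<psi>" for \<Gamma> \<psi>
    unfolding matrix_cons_def
  proof (intro allI impI)
    fix v :: "nat \<Rightarrow> real" assume v: "range v \<subseteq> {0,1}" and G: "\<forall>\<gamma>\<in>\<Gamma>. eval I v \<gamma> \<in> {1}"
    have v1: "range v \<subseteq> {0,1/2,1}" using v sub2 by (rule order_trans)
    have G1: "\<forall>\<gamma>\<in>\<Gamma>. eval I v \<gamma> \<in> F1" using G F1(3) by simp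
    have "eval I v \<psi> \<in> F1" using that(3) v1 G1 unfolding matrix_cons_def by simp
    moreover have "eval I v \<psi> \<in> {0,1}" using eval_closed[OF A2 v] that(2) by (auto simp: wff_def)
    ultimately show "eval I v \<psi> \<in> {1}" using F1(2) by auto
  qed
  have strict: "strict_sub_logic ar (matrix_cons I {0, 1/2, 1} F1) (matrix_cons I {0, 1} {1})"
    using key distinct unfolding strict_sub_logic_def sub_logic_def by blast
  have ext: "same_logic ar (axiom_ext ar (matrix_cons I {0, 1/2, 1} F1) \<phi>) (matrix_cons I {0, 1} {1})"
    if phi: "\<phi> \<in> wff ar" "matrix_cons I {0, 1} {1} {} \<phi>" "\<not> matrix_cons I {0, 1/2, 1} F1 {} \<phi>" for \<phi>
  proof -
    have insts_wf: "sub_insts ar \<phi> \<subseteq> wff ar"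
    proof
      fix x assume "x \<in> sub_insts ar \<phi>"
      then obtain \<sigma> where x: "x = subst \<sigma> \<phi>" and s: "\<forall>n. wf ar (\<sigma> n)" unfolding sub_insts_def by auto
      have "wf ar t \<Longrightarrow> wf ar (subst \<sigma> t)" for t
        by (induction t) (use s in auto)
      then show "x \<in> wff ar" using x phi(1) by (auto simp: wff_def)
    qed
    have inst_valid: "eval I v x \<in> {1}" if v: "range v \<subseteq> {0,1}" and x: "x \<in> sub_insts ar \<phi>" for v x
    proof -
      obtain \<sigma> where x: "x = subst \<sigma> \<phi>" and s: "\<forall>n. wf ar (\<sigma> n)" using x unfolding sub_insts_def by auto
      have "range (\<lambda>n. eval I v (\<sigma> n)) \<subseteq> {0,1}" using eval_closed[OF A2 v] s by auto
      then show ?thesis using phi(2) unfolding x eval_subst matrix_cons_def by blast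
    qed
    obtain w where w: "range w \<subseteq> {0,1/2,1}" "eval I w \<phi> \<notin> F1"
      using phi(3) unfolding matrix_cons_def by blast
    show ?thesis unfolding same_logic_def axiom_ext_def
    proof (intro allI impI iffI)
      fix \<Gamma> \<psi> assume G: "\<Gamma> \<subseteq> wff ar" "\<psi> \<in> wff ar"
        and c: "matrix_cons I {0, 1 / 2, 1} F1 (\<Gamma> \<union> sub_insts ar \<phi>) \<psi>"
      have "matrix_cons I {0, 1} {1} (\<Gamma> \<union> sub_insts ar \<phi>) \<psi>"
        using key[OF _ G(2) c] G(1) insts_wf by auto
      then show "matrix_cons I {0, 1} {1} \<Gamma> \<psi>"
        using inst_valid unfolding matrix_cons_def by blast
    next
      fix \<Gamma> \<psi> assume G: "\<Gamma> \<subseteq> wff ar" "\<psi> \<in> wff ar"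
        and c: "matrix_cons I {0, 1} {1} \<Gamma> \<psi>"
      show "matrix_cons I {0, 1 / 2, 1} F1 (\<Gamma> \<union> sub_insts ar \<phi>) \<psi>"
        unfolding matrix_cons_def
      proof (intro allI impI)
        fix v :: "nat \<Rightarrow> real" assume v: "range v \<subseteq> {0,1/2,1}"
          and H: "\<forall>\<gamma>\<in>\<Gamma> \<union> sub_insts ar \<phi>. eval I v \<gamma> \<in> F1"
        have v2: "range v \<subseteq> {0,1}"
        proof (rule ccontr)
          assume "\<not> ?thesis"
          then obtain m where "v m \<notin> {0,1}" by auto
          moreover have "v m \<in> {0,1/2,1}" using v by (meson range_eqI subsetD)
          ultimately have m: "v m = 1/2" by auto
          define \<sigma> where "\<sigma> n = (if w n = 1 then top else if w n = 0 then bot else Var m)" for n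
          have s: "\<forall>n. wf ar (\<sigma> n)" using top(1) bot(1) by (auto simp: \<sigma>_def)
          have "(\<lambda>n. eval I v (\<sigma> n)) = w"
          proof
            fix n
            have wn: "w n \<in> {0,1/2,1}" using w(1) by (meson range_eqI subsetD)
            show "eval I v (\<sigma> n) = w n"
              using wn w(1) top(3)[OF v] bot(3)[OF v] m by (auto simp: \<sigma>_def)
          qed
          moreover have "subst \<sigma> \<phi> \<in> sub_insts ar \<phi>" using s unfolding sub_insts_def by blast
          ultimately have "eval I v (subst \<sigma> \<phi>) \<in> F1" "eval I v (subst \<sigma> \<phi>) = eval I w \<phi>"
            using H eval_subst[of I v \<sigma> \<phi>] by (blast, simp)
          then show False using w(2) by simp
        qed
        have "\<forall>\<gamma>\<in>\<Gamma>. eval I v \<gamma> \<in> {1}"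
        proof
          fix \<gamma> assume g: "\<gamma> \<in> \<Gamma>"
          have "eval I v \<gamma> \<in> {0,1}" using eval_closed[OF A2 v2] g G(1) by (auto simp: wff_def)
          moreover have "eval I v \<gamma> \<in> F1" using H g by blast
          ultimately show "eval I v \<gamma> \<in> {1}" using F1(2) by auto
        qed
        then have "eval I v \<psi> \<in> {1}" using c v2 unfolding matrix_cons_def by blast
        then show "eval I v \<psi> \<in> F1" using F1(3) by auto
      qed
    qed
  qed
  show ?thesis unfolding maximal_wrt_def using strict ext by blast
qed

end
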